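(* Let $f:[0,1]\to\mathbb{R}$ be a piecewise $C^1$, concave, non-negative function, let $a=\min\{\tau\in[0,1]: f(\tau)=\max_{[0,1]}f\}$, and assume $a>0$. Let $h>0$ and let $\gamma$ be the oriented curve $t\mapsto (y_1(t),y_2(t))=(1-t,\,f(1-t))$, $1-a\le t\le 1$ (running along the graph of $f$ from $(a,f(a))$ to $(0,f(0))$). Then for every $x_1\in[a/2,a]$, $$\int_\gamma\frac{y_1-x_1}{\left((y_1-x_1)^2+y_2^2+h^2\right)^{5/2}}\,dy_2>0,$$ equivalently $\int_0^a\frac{(t-x_1)f'(t)}{\left((t-x_1)^2+f(t)^2+h^2\right)^{5/2}}\,dt<0$. *)

theory Defs
  imports "HOL-Analysis.Analysis"
begin

end

theory Submission
  imports Defs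
begin


lemma int_nonpos_finite:
  fixes \<psi> :: "real \<Rightarrow> real"
  assumes "\<psi> integrable_on {c..d}" "finite T" "\<And>t. t \<in> {c..d} - T \<Longrightarrow> \<psi> t \<le> 0"
  shows "integral {c..d} \<psi> \<le> 0"
proof -
  define \<psi>' where "\<psi>' = (\<lambda>t. if t \<in> T then 0 else \<psi> t)"
  have eq: "integral {c..d} \<psi> = integral {c..d} \<psi>'"
    by (rule integral_spike[OF negligible_finite[OF assms(2)]]) (auto simp: \<psi>'_def)
  have i: "\<psi>' integrable_on {c..d}"
    by (rule integrable_spike_finite[OF assms(2) _ assms(1)]) (auto simp: \<psi>'_def)
  have "integral {c..d} \<psi>' \<le> integral {c..d} (\<lambda>_. 0::real)"
    by (rule integral_le[OF i]) (use assms(3) in \<open>auto simp: \<psi>'_def\<close>)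
  then show ?thesis using eq by simp
qed

lemma gap:
  fixes c d :: real
  assumes "c < d" "finite T"
  shows "\<exists>c' d'. c < c' \<and> c' < d' \<and> d' < d \<and> {c'..d'} \<inter> T = {}"
proof -
  define M where "M = (T \<inter> {c<..<d}) \<union> {d}"
  have fM: "finite M" "M \<noteq> {}" using assms by (auto simp: M_def)
  define m where "m = Min M"
  have mM: "m \<in> M" using fM Min_in m_def by blast
  have mc: "m > c" "m \<le> d" using mM assms(1) fM by (auto simp: M_def m_def)
  have mle: "\<And>t. t \<in> M \<Longrightarrow> m \<le> t" using fM by (simp add: m_def)
  show ?thesis
  proof (intro exI conjI)
    show "c < c + (m - c)/3" "c + (m - c)/3 < c + 2*(m-c)/3" "c + 2*(m-c)/3 < d" using mc by (auto simp: field_simps)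
    show "{c + (m - c)/3..c + 2*(m-c)/3} \<inter> T = {}"
    proof (rule ccontr)
      assume "{c + (m - c)/3..c + 2*(m-c)/3} \<inter> T \<noteq> {}"
      then obtain t where t: "t \<in> T" "c + (m - c)/3 \<le> t" "t \<le> c + 2*(m-c)/3" by auto
      then have "t \<in> M" using mc by (auto simp: M_def field_simps)
      then have "m \<le> t" by (rule mle)
      then show False using t mc by (simp add: field_simps)
    qed
  qed
qed

lemma int_neg_strict:
  fixes \<psi> :: "real \<Rightarrow> real"
  assumes int: "\<psi> integrable_on {c..d}" and cd: "c < d" and T: "finite T"
    and neg: "\<And>t. t \<in> {c..d} - T \<Longrightarrow> \<psi> t < 0"
    and cont: "continuous_on ({c..d} - T) \<psi>"
  shows "integral {c..d} \<psi> < 0"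
proof -
  obtain c' d' where cd': "c < c'" "c' < d'" "d' < d" "{c'..d'} \<inter> T = {}"
    using gap[OF cd T] by blast
  have sub: "{c'..d'} \<subseteq> {c..d} - T" using cd' by auto
  have c1: "continuous_on {c'..d'} \<psi>" using continuous_on_subset[OF cont sub] .
  have "integral {c'..d'} \<psi> < integral {c'..d'} (\<lambda>_. 0)"
  proof (rule integral_less_real[OF c1])
    show "{c'<..<d'} \<noteq> {}" using cd' by auto
    fix x assume "x \<in> {c'<..<d'}"
    then have "x \<in> {c'..d'}" by auto
    then have "x \<in> {c..d} - T" using sub by blast
    then show "\<psi> x < 0" by (rule neg)
  qed auto
  then have m: "integral {c'..d'} \<psi> < 0" by simp
  have l: "integral {c..c'} \<psi> \<le> 0"
    by (rule int_nonpos_finite[OF _ T]) (use int cd' neg in \<open>auto intro: integrable_subinterval_real less_imp_le\<close>)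
  have r: "integral {d'..d} \<psi> \<le> 0"
    by (rule int_nonpos_finite[OF _ T]) (use int cd' neg in \<open>auto intro: integrable_subinterval_real less_imp_le\<close>)
  have i2: "\<psi> integrable_on {c'..d}" using int cd' by (auto intro: integrable_subinterval_real)
  have "integral {c..d} \<psi> = integral {c..c'} \<psi> + integral {c'..d} \<psi>"
    using Henstock_Kurzweil_Integration.integral_combine[OF _ _ int, of c'] cd' by simp
  also have "integral {c'..d} \<psi> = integral {c'..d'} \<psi> + integral {d'..d} \<psi>"
    using Henstock_Kurzweil_Integration.integral_combine[OF _ _ i2, of d'] cd' by simp
  finally show ?thesis using l r m by linarith
qed

lemma reflect_int:
  fixes \<phi> :: "real \<Rightarrow> real"
  assumes "(\<phi> has_integral i) {p..q}" "p \<le> q"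
  shows "((\<lambda>u. \<phi> (2*x - u)) has_integral i) {2*x - q..2*x - p}"
proof -
  have "((\<lambda>u. \<phi> ((-1) *\<^sub>R u + 2*x)) has_integral (1 / (\<bar>-1\<bar> ^ DIM(real))) *\<^sub>R i)
      ((\<lambda>u. (1 / (-1)) *\<^sub>R u + -((1 / (-1)) *\<^sub>R (2*x))) ` cbox p q)"
    by (rule has_integral_affinity) (use assms in auto)
  moreover have "((\<lambda>u. (1 / (-1)) *\<^sub>R u + -((1 / (-1)) *\<^sub>R (2*x))) ` cbox p q) = {2*x - q..2*x - p}"
    using image_affinity_atLeastAtMost[of "-1" "2*x" p q] assms(2) by (simp add: algebra_simps)
  ultimately show ?thesis by (simp add: algebra_simps)
qed


theorem lemma4p7:
  fixes f :: "real \<Rightarrow> real" and a h x1 :: real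
  assumes pc1: "f piecewise_C1_differentiable_on {0..1}"
    and conc: "concave_on {0..1} f"
    and nonneg: "\<forall>t\<in>{0..1}. f t \<ge> 0"
    and a_in: "a \<in> {0..1}"
    and a_max: "\<forall>\<tau>\<in>{0..1}. f \<tau> \<le> f a"
    and a_min: "\<forall>\<tau>\<in>{0..1}. f \<tau> = f a \<longrightarrow> a \<le> \<tau>"
    and a_pos: "a > 0"
    and h_pos: "h > 0"
    and x1: "x1 \<in> {a/2..a}"
  shows "integral {1-a..1}
           (\<lambda>t. ((1 - t) - x1) / (((1 - t) - x1)\<^sup>2 + (f (1 - t))\<^sup>2 + h\<^sup>2) powr (5/2)
                 * deriv (\<lambda>s. f (1 - s)) t) > 0
       \<and> integral {0..a}
           (\<lambda>t. (t - x1) * deriv f t / ((t - x1)\<^sup>2 + (f t)\<^sup>2 + h\<^sup>2) powr (5/2)) < 0"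
proof -
  from pc1 obtain S where S: "finite S" "f C1_differentiable_on ({0..1} - S)"
    and fc: "continuous_on {0..1} f"
    unfolding piecewise_C1_differentiable_on_def by blast
  have dif: "\<And>x. x \<in> {0..1} - S \<Longrightarrow> f differentiable at x"
    and vc: "continuous_on ({0..1} - S) (\<lambda>x. vector_derivative f (at x))"
    using S(2) unfolding C1_differentiable_on_eq by auto
  define f' where "f' = deriv f"
  have D: "\<And>x. x \<in> {0..1} - S \<Longrightarrow> (f has_real_derivative f' x) (at x)"
    using dif by (simp add: f'_def DERIV_deriv_iff_real_differentiable)
  have vd: "\<And>x. x \<in> {0..1} - S \<Longrightarrow> vector_derivative f (at x) = f' x"
    using D by (metis has_real_derivative_iff_has_vector_derivative vector_derivative_at)
  have f'c: "continuous_on ({0..1} - S) f'"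
    using continuous_on_eq[OF vc vd] by blast
  have a1: "0 < a" "a \<le> 1" using a_pos a_in by auto
  have x1a: "a/2 \<le> x1" "x1 \<le> a" using x1 by auto
  have fa_gt: "f s < f a" if "0 \<le> s" "s < a" for s
  proof -
    have "s \<in> {0..1}" using that a1 by auto
    then have "f s \<le> f a" "f s = f a \<longrightarrow> a \<le> s" using a_max a_min by auto
    then show ?thesis using that by auto
  qed
  have mono: "f s < f t" if st: "0 \<le> s" "s < t" "t \<le> a" for s t
  proof -
    define l where "l = (t - s)/(a - s)"
    have l: "0 < l" "l \<le> 1" using st by (auto simp: l_def field_simps)
    have ne: "a - s \<noteq> 0" using st by auto
    have la: "l * (a - s) = t - s" using ne by (simp add: l_def)
    have "(1 - l) *\<^sub>R s + l *\<^sub>R a = s + l * (a - s)" by (simp add: algebra_simps)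
    then have "(1 - l) *\<^sub>R s + l *\<^sub>R a = t" using la by simp
    moreover have "f ((1 - l) *\<^sub>R s + l *\<^sub>R a) \<ge> (1 - l) * f s + l * f a"
      using concave_onD[OF conc, of l s a] l st a1 by auto
    ultimately have "f t \<ge> (1 - l) * f s + l * f a" by simp
    moreover have "f s < f a" using fa_gt st by auto
    moreover have "l * (f a - f s) > 0" using l calculation by simp
    ultimately show "f s < f t" by (simp add: algebra_simps)
  qed
  have tang: "f x - f c \<le> f' c * (x - c)" if c: "c \<in> {0<..<1} - S" and x: "x \<in> {0..1}" for c x
  proof -
    have cv: "convex_on {0..1} (\<lambda>x. - f x)" using conc by (simp add: concave_on_def)
    have "((\<lambda>x. - f x) has_field_derivative - f' c) (at c within {0..1})"
      using D[of c] c by (auto intro: DERIV_minus has_field_derivative_at_within)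
    then have "(- f x) - (- f c) \<ge> (- f' c) * (x - c)"
      by (intro convex_on_imp_above_tangent[OF cv]) (use c x in auto)
    then show ?thesis by (simp add: algebra_simps)
  qed
  have fpos: "f' c > 0" if c: "c \<in> {0<..<a} - S" for c
  proof -
    have "f a - f c \<le> f' c * (a - c)" using tang[of c a] c a1 by auto
    moreover have "f c < f a" using fa_gt c by auto
    ultimately have "0 < f' c * (a - c)" by linarith
    then show ?thesis using c by (simp add: zero_less_mult_iff)
  qed
  have fdec: "f' d \<le> f' c" if c: "c \<in> {0<..<1} - S" and d: "d \<in> {0<..<1} - S" and cd: "c < d" for c d
  proof -
    have "f d - f c \<le> f' c * (d - c)" using tang[of c d] c d by auto
    moreover have "f c - f d \<le> f' d * (c - d)" using tang[of d c] c d by auto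
    ultimately have "f' d * (d - c) \<le> f' c * (d - c)" by (simp add: algebra_simps)
    then show ?thesis using cd by simp
  qed
  define Q where "Q t = ((t - x1)\<^sup>2 + (f t)\<^sup>2 + h\<^sup>2) powr (5/2)" for t
  have Bpos: "(t - x1)\<^sup>2 + (f t)\<^sup>2 + h\<^sup>2 > 0" for t using h_pos by (simp add: add_nonneg_pos)
  have Qpos: "Q t > 0" for t using Bpos[of t] by (simp add: Q_def)
  have Qc: "continuous_on {0..1} Q"
  proof -
    have "\<forall>t\<in>{0..1}. (t - x1)\<^sup>2 + (f t)\<^sup>2 + h\<^sup>2 \<noteq> 0"
      using Bpos by (metis less_irrefl)
    then show ?thesis unfolding Q_def by (auto intro!: continuous_intros fc)
  qed
  define g where "g t = (t - x1) * f' t / Q t" for t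
  have gc: "continuous_on ({0..1} - S) g"
    unfolding g_def using Qpos
    by (auto intro!: continuous_intros f'c continuous_on_subset[OF Qc] simp: less_imp_neq[symmetric])
  define T0 where "T0 = S \<union> {0, a}"
  have T0: "finite T0" using S(1) by (simp add: T0_def)
  have ftc: "(f' has_integral (f a - f 0)) {0..a}"
  proof (rule fundamental_theorem_of_calculus_interior_strong[OF S(1)])
    show "0 \<le> a" using a1 by simp
    show "continuous_on {0..a} f" using fc by (rule continuous_on_subset) (use a1 in auto)
    fix x assume "x \<in> {0<..<a} - S"
    then have "x \<in> {0..1} - S" using a1 by auto
    then show "(f has_vector_derivative f' x) (at x)"
      using D has_real_derivative_iff_has_vector_derivative by blast
  qed
  define f'' where "f'' t = (if t \<in> T0 then 0 else f' t)" for t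
  have f''i: "f'' integrable_on {0..a}"
    using integrable_spike_finite[OF T0 _ has_integral_integrable[OF ftc], of f''] by (auto simp: f''_def)
  have f''nn: "0 \<le> f'' t" if "t \<in> {0..a}" for t
  proof (cases "t \<in> T0")
    case False
    then have "t \<in> {0<..<a} - S" using that by (auto simp: T0_def)
    then show ?thesis using fpos[of t] by (simp add: f''_def less_imp_le)
  qed (simp add: f''_def)
  have f''a: "f'' absolutely_integrable_on {0..a}"
    by (rule nonnegative_absolutely_integrable_1[OF f''i f''nn])
  define cc where "cc t = (t - x1) / Q t" for t
  have ccc: "continuous_on {0..a} cc"
    unfolding cc_def using Qpos a1
    by (auto intro!: continuous_intros continuous_on_subset[OF Qc] simp: less_imp_neq[symmetric])
  have pa: "(\<lambda>t. cc t * f'' t) absolutely_integrable_on {0..a}"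
  proof (rule absolutely_integrable_bounded_measurable_product_real[OF _ _ _ f''a])
    show "cc \<in> borel_measurable (lebesgue_on {0..a})"
      by (rule continuous_imp_measurable_on_sets_lebesgue[OF ccc]) simp
    show "{0..a} \<in> sets lebesgue" by simp
    show "bounded (cc ` {0..a})"
      by (rule compact_imp_bounded[OF compact_continuous_image[OF ccc]]) simp
  qed
  have gi: "g integrable_on {0..a}"
  proof (rule integrable_spike_finite[OF T0 _ set_lebesgue_integral_eq_integral(1)[OF pa]])
    fix t assume "t \<in> {0..a} - T0"
    then show "g t = cc t * f'' t" by (simp add: g_def cc_def f''_def)
  qed
  define I where "I = integral {0..a} g"
  have gI: "(g has_integral I) {0..a}" using gi by (simp add: I_def integrable_integral)
  have Ineg: "I < 0"
  proof (cases "x1 = a")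
    case True
    have "integral {0..a} g < 0"
    proof (rule int_neg_strict[OF gi _ T0])
      show "0 < a" using a1 by simp
      fix t assume t: "t \<in> {0..a} - T0"
      then have tS: "t \<in> {0<..<a} - S" by (auto simp: T0_def)
      have "t - x1 < 0" using tS True by auto
      moreover have "f' t > 0" using fpos tS by blast
      ultimately show "g t < 0" using Qpos[of t] by (simp add: g_def mult_neg_pos divide_neg_pos)
    next
      show "continuous_on ({0..a} - T0) g"
        by (rule continuous_on_subset[OF gc]) (use a1 in \<open>auto simp: T0_def\<close>)
    qed
    then show ?thesis by (simp add: I_def)
  next
    case False
    then have xa: "x1 < a" using x1a by simp
    have x0: "0 < x1" using x1a a1 by simp
    define b where "b = 2*x1 - a"
    have b: "0 \<le> b" "b \<le> x1" using x1a by (auto simp: b_def)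
    have c1: "integral {0..b} g + integral {b..a} g = I"
      unfolding I_def by (rule Henstock_Kurzweil_Integration.integral_combine[OF _ _ gi]) (use b x1a in auto)
    have gib: "g integrable_on {b..a}" by (rule integrable_subinterval_real[OF gi]) (use b in auto)
    have c2: "integral {b..x1} g + integral {x1..a} g = integral {b..a} g"
      by (rule Henstock_Kurzweil_Integration.integral_combine[OF _ _ gib]) (use b x1a in auto)
    have gibx: "(g has_integral integral {b..x1} g) {b..x1}"
      using integrable_subinterval_real[OF gi, of b x1] b x1a by (simp add: integrable_integral)
    have "((\<lambda>u. g (2*x1 - u)) has_integral integral {b..x1} g) {2*x1 - x1..2*x1 - b}"
      by (rule reflect_int[OF gibx b(2)])
    then have rI: "((\<lambda>u. g (2*x1 - u)) has_integral integral {b..x1} g) {x1..a}" by (simp add: b_def)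
    have gix: "g integrable_on {x1..a}" by (rule integrable_subinterval_real[OF gi]) (use b x1a in auto)
    have sumI: "integral {x1..a} (\<lambda>u. g u + g (2*x1 - u)) = integral {x1..a} g + integral {b..x1} g"
      using integral_add[OF gix has_integral_integrable[OF rI]] integral_unique[OF rI] by simp
    have part1: "integral {0..b} g \<le> 0"
    proof (rule int_nonpos_finite[OF _ T0])
      show "g integrable_on {0..b}" by (rule integrable_subinterval_real[OF gi]) (use b x1a in auto)
      fix t assume t: "t \<in> {0..b} - T0"
      then have tS: "t \<in> {0<..<a} - S" using b x1a by (auto simp: T0_def)
      have "t - x1 \<le> 0" using t b by auto
      moreover have "f' t > 0" using fpos tS by blast
      ultimately show "g t \<le> 0" using Qpos[of t] by (simp add: g_def mult_nonpos_nonneg divide_nonpos_pos)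
    qed
    define T2 where "T2 = S \<union> (\<lambda>u. 2*x1 - u) ` S \<union> {x1, a}"
    have T2: "finite T2" using S(1) by (simp add: T2_def)
    have part2: "integral {x1..a} (\<lambda>u. g u + g (2*x1 - u)) < 0"
    proof (rule int_neg_strict[OF _ xa T2])
      show "(\<lambda>u. g u + g (2*x1 - u)) integrable_on {x1..a}"
        by (rule integrable_add[OF gix has_integral_integrable[OF rI]])
      fix u assume u: "u \<in> {x1..a} - T2"
      define v where "v = 2*x1 - u"
      have uS: "u \<in> {0<..<a} - S" using u x0 by (auto simp: T2_def)
      have vnS: "v \<notin> S"
      proof
        assume "v \<in> S"
        then have "u \<in> (\<lambda>u. 2*x1 - u) ` S" by (rule rev_image_eqI) (simp add: v_def)
        then show False using u by (auto simp: T2_def)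
      qed
      have vS: "v \<in> {0<..<a} - S" using u b vnS x1a by (auto simp: T2_def v_def b_def)
      have vu: "v < u" using u by (auto simp: v_def T2_def)
      have fd: "f' u \<le> f' v" using fdec[of v u] uS vS vu a1 by auto
      have fv: "f' v > 0" using fpos vS by blast
      have flt: "f v < f u" using mono[of v u] vS uS vu by auto
      have f0: "0 \<le> f v" using nonneg vS a1 by auto
      have sq: "(f v)^2 < (f u)^2" using flt f0 by (simp add: power_strict_mono)
      have "(v - x1)^2 = (u - x1)^2" by (simp add: v_def power2_eq_square algebra_simps)
      then have QQ: "Q v < Q u" unfolding Q_def using sq Bpos[of v] by (intro powr_less_mono2) auto
      define s where "s = u - x1"
      have s: "s > 0" using u by (auto simp: s_def T2_def)
      have gu: "g u = s * (f' u / Q u)" by (simp add: g_def s_def)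
      have vx: "v - x1 = - s" by (simp add: v_def s_def)
      have gv: "g v = - s * (f' v / Q v)" by (simp add: g_def vx)
      have e1: "f' u / Q u \<le> f' v / Q u" using fd Qpos[of u] by (simp add: divide_right_mono)
      have e2: "f' v / Q u < f' v / Q v" using QQ fv Qpos[of v] by (intro divide_strict_left_mono) auto
      have "g u + g v = s * (f' u / Q u - f' v / Q v)" using gu gv by (simp add: algebra_simps)
      also have "\<dots> < 0" using s e1 e2 by (simp add: mult_pos_neg)
      finally show "g u + g (2*x1 - u) < 0" by (simp add: v_def)
    next
      show "continuous_on ({x1..a} - T2) (\<lambda>u. g u + g (2*x1 - u))"
      proof (intro continuous_on_add)
        show "continuous_on ({x1..a} - T2) g"
          by (rule continuous_on_subset[OF gc]) (use x1a a1 x0 in \<open>auto simp: T2_def\<close>)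
        show "continuous_on ({x1..a} - T2) (\<lambda>u. g (2*x1 - u))"
        proof (rule continuous_on_compose2[OF gc])
          show "continuous_on ({x1..a} - T2) (\<lambda>u. 2*x1 - u)" by (intro continuous_intros)
          show "(\<lambda>u. 2*x1 - u) ` ({x1..a} - T2) \<subseteq> {0..1} - S"
          proof
            fix w assume "w \<in> (\<lambda>u. 2*x1 - u) ` ({x1..a} - T2)"
            then obtain u where u: "u \<in> {x1..a} - T2" "w = 2*x1 - u" by auto
            have "w \<notin> S"
            proof
              assume "w \<in> S"
              then have "u \<in> (\<lambda>u. 2*x1 - u) ` S" by (rule rev_image_eqI) (simp add: u(2))
              then show False using u by (auto simp: T2_def)
            qed
            then show "w \<in> {0..1} - S" using u x1a a1 by auto
          qed
        qed
      qed
    qed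
    show "I < 0" using c1 c2 sumI part1 part2 by linarith
  qed
  have second: "integral {0..a}
           (\<lambda>t. (t - x1) * deriv f t / ((t - x1)\<^sup>2 + (f t)\<^sup>2 + h\<^sup>2) powr (5/2)) < 0"
  proof -
    have "g = (\<lambda>t. (t - x1) * deriv f t / ((t - x1)\<^sup>2 + (f t)\<^sup>2 + h\<^sup>2) powr (5/2))"
      by (rule ext) (simp add: g_def Q_def f'_def)
    then show ?thesis using Ineg by (simp add: I_def)
  qed
  have "((\<lambda>u. g (2*(1/2) - u)) has_integral I) {2*(1/2) - a..2*(1/2) - 0}"
    by (rule reflect_int[OF gI]) (use a1 in simp)
  then have r1: "((\<lambda>u. - g (1 - u)) has_integral - I) {1-a..1}"
    by (simp add: has_integral_neg)
  define S1 where "S1 = (\<lambda>s. 1 - s) ` S"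
  have S1: "finite S1" using S(1) by (simp add: S1_def)
  have eqe: "((1 - t) - x1) / (((1 - t) - x1)\<^sup>2 + (f (1 - t))\<^sup>2 + h\<^sup>2) powr (5/2)
                 * deriv (\<lambda>s. f (1 - s)) t = - g (1 - t)" if t: "t \<in> {1-a..1} - S1" for t
  proof -
    have "1 - t \<in> {0..1} - S" using t a1 by (auto simp: S1_def image_iff)
    then have d1: "(f has_real_derivative f' (1 - t)) (at (1 - t))" by (rule D)
    have d2: "((\<lambda>s. 1 - s) has_real_derivative -1) (at t)"
      by (auto intro!: derivative_eq_intros)
    have "((\<lambda>s. f (1 - s)) has_real_derivative f' (1 - t) * (-1)) (at t)"
      using DERIV_chain2[OF d1 d2] by simp
    then have "deriv (\<lambda>s. f (1 - s)) t = - f' (1 - t)" using DERIV_imp_deriv by fastforce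
    then show ?thesis by (simp add: g_def Q_def)
  qed
  have "((\<lambda>t. ((1 - t) - x1) / (((1 - t) - x1)\<^sup>2 + (f (1 - t))\<^sup>2 + h\<^sup>2) powr (5/2)
                 * deriv (\<lambda>s. f (1 - s)) t) has_integral - I) {1-a..1}"
    by (rule has_integral_spike_finite[OF S1 _ r1]) (rule eqe)
  then have first: "integral {1-a..1}
           (\<lambda>t. ((1 - t) - x1) / (((1 - t) - x1)\<^sup>2 + (f (1 - t))\<^sup>2 + h\<^sup>2) powr (5/2)
                 * deriv (\<lambda>s. f (1 - s)) t) > 0"
    using Ineg by (simp add: integral_unique)
  show ?thesis using first second by blast
qed

end
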